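(* Let $\Phi$ be a finite crystallographic root system and let $\Psi,\Psi'\subseteq\Phi^+$ be such that $\operatorname{ord}(\beta,\gamma)=2$ for all $\beta\in\Psi$ and $\gamma\in\Psi'$. Then the families of random variables $\{\mathcal{X}_\beta\}_{\beta\in\Psi}$ and $\{\mathcal{X}_\gamma\}_{\gamma\in\Psi'}$ are independent.
   Context: $\Phi$ is a finite crystallographic root system with positive roots $\Phi^+$ and Weyl group $W$; $s_\beta$ is the reflection in $\beta$ and $\operatorname{ord}(\beta,\gamma)=\min\{k>0:(s_\beta s_\gamma)^k=e\}$ (so $\operatorname{ord}(\beta,\gamma)=2$ means $\beta\ne\gamma$ are orthogonal). For $\beta\in\Phi^+$, $\mathcal{X}_\beta$ is the Bernoulli random variable on $W$ with the uniform distribution, $\mathcal{X}_\beta(w)=1$ if $w(\beta)\in-\Phi^+$ and $0$ otherwise. *)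

theory Defs
  imports "HOL-Probability.Probability"
begin

definition refl_vec :: "'a::euclidean_space \<Rightarrow> 'a \<Rightarrow> 'a" where
  "refl_vec a x = x - (2 * (x \<bullet> a) / (a \<bullet> a)) *\<^sub>R a"

definition crystallographic_root_system :: "'a::euclidean_space set \<Rightarrow> bool" where
  "crystallographic_root_system R \<longleftrightarrow>
     finite R \<and> 0 \<notin> R \<and> span R = UNIV \<and>
     (\<forall>a\<in>R. refl_vec a ` R \<subseteq> R) \<and>
     (\<forall>a\<in>R. \<forall>b\<in>R. 2 * (b \<bullet> a) / (a \<bullet> a) \<in> \<int>) \<and>
     (\<forall>a\<in>R. \<forall>c::real. c *\<^sub>R a \<in> R \<longrightarrow> c = 1 \<or> c = -1)"

definition positive_system :: "'a::euclidean_space set \<Rightarrow> 'a set \<Rightarrow> bool" where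
  "positive_system R P \<longleftrightarrow>
     (\<exists>v. (\<forall>a\<in>R. v \<bullet> a \<noteq> 0) \<and> P = {a\<in>R. v \<bullet> a > 0})"

inductive_set weyl_group :: "'a::euclidean_space set \<Rightarrow> ('a \<Rightarrow> 'a) set" for R where
  weyl_id: "id \<in> weyl_group R"
| weyl_step: "w \<in> weyl_group R \<Longrightarrow> a \<in> R \<Longrightarrow> refl_vec a \<circ> w \<in> weyl_group R"

definition ord_refl :: "'a::euclidean_space \<Rightarrow> 'a \<Rightarrow> nat" where
  "ord_refl b g = (LEAST k. k > 0 \<and> (refl_vec b \<circ> refl_vec g) ^^ k = id)"

definition weyl_uniform :: "'a::euclidean_space set \<Rightarrow> ('a \<Rightarrow> 'a) measure" where
  "weyl_uniform R = measure_pmf (pmf_of_set (weyl_group R))"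

definition X_rv :: "'a::euclidean_space set \<Rightarrow> 'a \<Rightarrow> ('a \<Rightarrow> 'a) \<Rightarrow> real" where
  "X_rv P b w = (if w b \<in> uminus ` P then 1 else 0)"

end

theory Submission imports Defs begin

lemma refl_linear: "linear (refl_vec a)"
  by (rule linearI) (auto simp: refl_vec_def inner_add_left algebra_simps add_divide_distrib scaleR_add_left)

lemma refl_inner: "refl_vec a x \<bullet> refl_vec a y = x \<bullet> y"
proof (cases "a \<bullet> a = 0")
  case True then show ?thesis by (simp add: refl_vec_def)
next
  case False
  then show ?thesis
    by (simp add: refl_vec_def inner_diff_left inner_diff_right inner_commute field_simps)
qed

lemma refl_inner_a: "refl_vec a x \<bullet> a = - (x \<bullet> a)"
proof (cases "a \<bullet> a = 0")
  case True then show ?thesis by (simp add: refl_vec_def)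
next
  case False
  then show ?thesis by (simp add: refl_vec_def inner_diff_left)
qed

lemma refl_invol: "refl_vec a (refl_vec a x) = x"
proof -
  have "refl_vec a (refl_vec a x) = refl_vec a x + (2 * (x \<bullet> a) / (a \<bullet> a)) *\<^sub>R a"
    by (subst refl_vec_def, simp add: refl_inner_a)
  also have "... = x" by (simp add: refl_vec_def)
  finally show ?thesis .
qed

lemma refl_fix: "x \<bullet> a = 0 \<Longrightarrow> refl_vec a x = x"
  by (simp add: refl_vec_def)

lemma refl_self: "a \<noteq> 0 \<Longrightarrow> refl_vec a a = - a"
  by (simp add: refl_vec_def scaleR_2)

lemma W_comp: "w1 \<in> weyl_group R \<Longrightarrow> w2 \<in> weyl_group R \<Longrightarrow> w1 \<circ> w2 \<in> weyl_group R"
  by (induction rule: weyl_group.induct) (auto simp: comp_assoc intro: weyl_group.intros)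

lemma W_linear: "w \<in> weyl_group R \<Longrightarrow> linear w"
proof (induction rule: weyl_group.induct)
  case weyl_id show ?case by (rule linearI) auto
next
  case (weyl_step w a) show ?case using linear_compose[OF weyl_step.IH refl_linear] .
qed

lemma W_bij: "w \<in> weyl_group R \<Longrightarrow> bij w"
proof (induction rule: weyl_group.induct)
  case weyl_id then show ?case by (rule bij_id)
next
  case (weyl_step w a)
  have "bij (refl_vec a)" by (rule o_bij[of "refl_vec a"]) (auto simp: refl_invol fun_eq_iff)
  then show ?case using bij_comp[OF weyl_step.IH] by blast
qed

lemma W_inner: "w \<in> weyl_group R \<Longrightarrow> w x \<bullet> w y = x \<bullet> y"
  by (induction rule: weyl_group.induct) (auto simp: refl_inner)

lemma W_mono: assumes "R1 \<subseteq> R2" "w \<in> weyl_group R1" shows "w \<in> weyl_group R2"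
  using assms(2) by (induction rule: weyl_group.induct) (use assms(1) in \<open>auto intro!: weyl_group.weyl_step weyl_group.weyl_id simp del: comp_apply id_apply\<close>)

lemma W_maps: assumes "\<And>a x. a \<in> R \<Longrightarrow> x \<in> S \<Longrightarrow> refl_vec a x \<in> S" "w \<in> weyl_group R" "x \<in> S" shows "w x \<in> S"
  using assms(2) by (induction rule: weyl_group.induct) (use assms in auto)

lemma W_finite:
  assumes "crystallographic_root_system R"
  shows "finite (weyl_group R)"
proof -
  have fin: "finite R" and sp: "span R = UNIV" and cl: "\<And>a x. a \<in> R \<Longrightarrow> x \<in> R \<Longrightarrow> refl_vec a x \<in> R"
    using assms unfolding crystallographic_root_system_def by auto
  have "inj_on (\<lambda>w. restrict w R) (weyl_group R)"
  proof (rule inj_onI)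
    fix w1 w2 assume w: "w1 \<in> weyl_group R" "w2 \<in> weyl_group R" and eq: "restrict w1 R = restrict w2 R"
    show "w1 = w2"
    proof
      fix x
      have "x \<in> span R" using sp by simp
      moreover have "\<forall>b\<in>R. w1 b = w2 b" using eq by (metis restrict_apply')
      ultimately show "w1 x = w2 x"
        using linear_eq_on_span[OF W_linear[OF w(1)] W_linear[OF w(2)]] by blast
    qed
  qed
  moreover have "(\<lambda>w. restrict w R) ` weyl_group R \<subseteq> PiE R (\<lambda>_. R)"
    using W_maps[of R R, OF cl] by auto
  moreover have "finite (PiE R (\<lambda>_. R))" using fin by (simp add: finite_PiE)
  ultimately show ?thesis by (meson finite_imageD finite_subset)
qed

lemma cr_closed: "crystallographic_root_system R \<Longrightarrow> a \<in> R \<Longrightarrow> x \<in> R \<Longrightarrow> refl_vec a x \<in> R"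
  unfolding crystallographic_root_system_def by blast

lemma cr_nz: "crystallographic_root_system R \<Longrightarrow> a \<in> R \<Longrightarrow> a \<noteq> 0"
  unfolding crystallographic_root_system_def by blast

lemma cr_red: "crystallographic_root_system R \<Longrightarrow> a \<in> R \<Longrightarrow> c *\<^sub>R a \<in> R \<Longrightarrow> c = 1 \<or> c = -1"
  unfolding crystallographic_root_system_def by blast

lemma neg_root:
  assumes "crystallographic_root_system R" "a \<in> R" shows "- a \<in> R"
proof -
  have "a \<noteq> 0" "refl_vec a a \<in> R" using cr_nz[OF assms] cr_closed[OF assms assms(2)] by auto
  then show ?thesis by (simp add: refl_self)
qed

lemma W_root:
  assumes "crystallographic_root_system R" "w \<in> weyl_group R" "x \<in> R" shows "w x \<in> R"
  using W_maps[of R R, OF cr_closed[OF assms(1)] assms(2,3)] by blast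

lemma funpow_W: "t \<in> weyl_group R \<Longrightarrow> t ^^ k \<in> weyl_group R"
proof (induction k)
  case 0 show ?case unfolding funpow.simps(1) by (rule weyl_group.weyl_id)
next
  case (Suc k) show ?case unfolding funpow.simps(2) using Suc by (intro W_comp) auto
qed

lemma W_finite_order:
  assumes cr: "crystallographic_root_system R" and t: "t \<in> weyl_group R"
  shows "\<exists>k>0. t ^^ k = id"
proof -
  let ?A = "{..card (weyl_group R)}"
  have fin: "finite (weyl_group R)" using W_finite[OF cr] .
  have "(\<lambda>k. t ^^ k) ` ?A \<subseteq> weyl_group R" using funpow_W[OF t] by auto
  then have "card ((\<lambda>k. t ^^ k) ` ?A) \<le> card (weyl_group R)" using fin by (simp add: card_mono)
  moreover have "card ?A = card (weyl_group R) + 1" by simp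
  ultimately have "card ((\<lambda>k. t ^^ k) ` ?A) < card ?A" by linarith
  then have "\<not> inj_on (\<lambda>k. t ^^ k) ?A" by (rule pigeonhole)
  then obtain i0 j0 where ij0: "i0 \<noteq> j0" "t ^^ i0 = t ^^ j0" unfolding inj_on_def by blast
  obtain i j where ij: "i < j" "t ^^ i = t ^^ j"
  proof (cases "i0 < j0")
    case True then show ?thesis using that ij0 by blast
  next
    case False then have "j0 < i0" using ij0(1) by linarith
    then show ?thesis using that ij0(2)[symmetric] by blast
  qed
  have jj: "(j - i) + i = j" using ij by simp
  have h: "t ^^ j = t ^^ (j - i) \<circ> t ^^ i" using funpow_add[of "j - i" i t, unfolded jj] .
  have eq: "t ^^ (j - i) \<circ> t ^^ i = t ^^ i" using h ij(2) by metis
  have "surj (t ^^ i)" using W_bij[OF funpow_W[OF t]] bij_is_surj by blast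
  have "t ^^ (j - i) = id"
  proof
    fix x
    obtain y where "x = (t ^^ i) y" using \<open>surj (t ^^ i)\<close> by (metis surjD)
    then show "(t ^^ (j - i)) x = id x" using fun_cong[OF eq, of y] by simp
  qed
  then show ?thesis using ij by (intro exI[of _ "j - i"]) auto
qed

lemma refl_neg: "refl_vec a (- x) = - refl_vec a x"
  using linear_neg[OF refl_linear] .

lemma ord_orth:
  assumes cr: "crystallographic_root_system R" and ps: "positive_system R P"
    and bP: "b \<in> P" and gP: "g \<in> P" and ord: "ord_refl b g = 2"
  shows "b \<bullet> g = 0"
proof (rule ccontr)
  assume nz: "b \<bullet> g \<noteq> 0"
  obtain v where v: "\<forall>a\<in>R. v \<bullet> a \<noteq> 0" and Pv: "P = {a\<in>R. v \<bullet> a > 0}"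
    using ps unfolding positive_system_def by blast
  have bR: "b \<in> R" and gR: "g \<in> R" and vb: "v \<bullet> b > 0" and vg: "v \<bullet> g > 0" using bP gP Pv by auto
  have red: "\<And>a c. a \<in> R \<Longrightarrow> c *\<^sub>R a \<in> R \<Longrightarrow> c = 1 \<or> c = -1"
    using cr_red[OF cr] by blast
  have b0: "b \<noteq> 0" and g0: "g \<noteq> 0" using cr_nz[OF cr bR] cr_nz[OF cr gR] by auto
  define t where "t = refl_vec b \<circ> refl_vec g"
  have "refl_vec b \<circ> (refl_vec g \<circ> id) \<in> weyl_group R"
    by (intro weyl_group.weyl_step weyl_group.weyl_id bR gR)
  then have tW: "t \<in> weyl_group R" unfolding t_def by simp
  have ex: "\<exists>k. 0 < k \<and> t ^^ k = id" using W_finite_order[OF cr tW] by blast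
  have "0 < ord_refl b g \<and> t ^^ (ord_refl b g) = id" unfolding ord_refl_def t_def[symmetric]
    by (rule LeastI_ex) (rule ex)
  then have t2: "t ^^ 2 = id" using ord by simp
  have "\<not> (0 < (1::nat) \<and> t ^^ 1 = id)"
    using not_less_Least[of 1 "\<lambda>k. 0 < k \<and> t ^^ k = id"] ord unfolding ord_refl_def t_def[symmetric] by simp
  then have t1: "t \<noteq> id" by simp
  have tt: "\<And>x. refl_vec b (refl_vec g (refl_vec b (refl_vec g x))) = x"
  proof -
    fix x show "refl_vec b (refl_vec g (refl_vec b (refl_vec g x))) = x"
      using fun_cong[OF t2, of x] by (simp add: numeral_2_eq_2 t_def)
  qed
  define y where "y = refl_vec b g"
  have "refl_vec b (refl_vec g (refl_vec b (refl_vec g (refl_vec g y)))) = refl_vec g y" by (rule tt)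
  then have "- y = refl_vec g y"
    by (simp add: refl_invol y_def refl_self[OF g0] refl_neg)
  then have e2: "2 *\<^sub>R y = (2 * (y \<bullet> g) / (g \<bullet> g)) *\<^sub>R g"
    unfolding refl_vec_def by (simp add: algebra_simps scaleR_2)
  have "y = (1/2) *\<^sub>R (2 *\<^sub>R y)" by simp
  also have "... = (1/2) *\<^sub>R ((2 * (y \<bullet> g) / (g \<bullet> g)) *\<^sub>R g)" by (simp only: e2)
  also have "... = ((y \<bullet> g) / (g \<bullet> g)) *\<^sub>R g" by simp
  finally have y1: "y = ((y \<bullet> g) / (g \<bullet> g)) *\<^sub>R g" .
  define cb where "cb = 2 * (g \<bullet> b) / (b \<bullet> b)"
  have cb0: "cb \<noteq> 0" using nz b0 by (simp add: cb_def inner_commute)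
  obtain lam where lam: "y = lam *\<^sub>R g" using y1 by blast
  have "y = g - cb *\<^sub>R b" unfolding y_def refl_vec_def cb_def ..
  then have "cb *\<^sub>R b = g - y" by simp
  also have "... = (1 - lam) *\<^sub>R g" unfolding lam by (simp add: algebra_simps)
  finally have e3: "cb *\<^sub>R b = (1 - lam) *\<^sub>R g" .
  have "b = (1/cb) *\<^sub>R (cb *\<^sub>R b)" using cb0 by simp
  also have "... = (1/cb) *\<^sub>R ((1 - lam) *\<^sub>R g)" by (simp only: e3)
  also have "... = ((1 - lam) / cb) *\<^sub>R g" by simp
  finally have "b = ((1 - lam) / cb) *\<^sub>R g" .
  then obtain mu where mu: "b = mu *\<^sub>R g" by blast
  then have "mu = 1 \<or> mu = -1" using red[OF gR] bR by blast
  then show False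
  proof
    assume "mu = 1"
    then have "b = g" using mu by simp
    then have "t = id" unfolding t_def by (auto simp: fun_eq_iff refl_invol)
    then show False using t1 by simp
  next
    assume "mu = -1"
    then have "b = - g" using mu by simp
    then show False using vb vg by simp
  qed
qed

lemma card_endo:
  assumes "finite A" "h ` A \<subseteq> A" "inj_on h A"
  shows "card {x\<in>A. Q (h x)} = card {x\<in>A. Q x}"
proof -
  have img: "h ` A = A" using endo_inj_surj assms by blast
  have "h ` {x\<in>A. Q (h x)} = {x\<in>A. Q x}"
  proof
    show "h ` {x\<in>A. Q (h x)} \<subseteq> {x\<in>A. Q x}" using assms(2) by auto
    show "{x\<in>A. Q x} \<subseteq> h ` {x\<in>A. Q (h x)}"
    proof
      fix y assume "y \<in> {x\<in>A. Q x}"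
      then have "y \<in> h ` A" "Q y" using img by auto
      then obtain x where "x \<in> A" "y = h x" "Q y" by blast
      then show "y \<in> h ` {x\<in>A. Q (h x)}" by auto
    qed
  qed
  moreover have "inj_on h {x\<in>A. Q (h x)}" using assms(3) by (rule inj_on_subset) auto
  ultimately show ?thesis by (metis card_image)
qed

lemma card_ind: "finite A \<Longrightarrow> card {x\<in>A. Q x} = (\<Sum>x\<in>A. if Q x then 1 else 0)"
  by (simp add: sum.If_cases Int_def)

locale setting =
  fixes R P Psi Psi' :: "'a::euclidean_space set" and v :: 'a
  assumes cr: "crystallographic_root_system R"
    and vR: "\<And>a. a \<in> R \<Longrightarrow> v \<bullet> a \<noteq> 0"
    and Pv: "P = {a\<in>R. v \<bullet> a > 0}"
    and sub1: "Psi \<subseteq> P" and sub2: "Psi' \<subseteq> P"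
    and orth: "\<And>b g. b \<in> Psi \<Longrightarrow> g \<in> Psi' \<Longrightarrow> b \<bullet> g = 0"
begin

abbreviation "W \<equiv> weyl_group R"
definition "D = {d\<in>R. \<forall>b\<in>Psi. d \<bullet> b = 0}"
abbreviation "U \<equiv> weyl_group D"

lemma D_R: "D \<subseteq> R" unfolding D_def by auto

lemma U_W: "u \<in> U \<Longrightarrow> u \<in> W" using W_mono[OF D_R] .

lemma finW: "finite W" using W_finite[OF cr] .
lemma finU: "finite U" using finW U_W by (meson finite_subset subsetI)

lemma U_fix: assumes "u \<in> U" "b \<in> Psi" shows "u b = b"
  using assms(1) by (induction rule: weyl_group.induct) (use assms(2) in \<open>auto simp: D_def refl_fix inner_commute\<close>)

lemma U_D: assumes "u \<in> U" "d \<in> D" shows "u d \<in> D"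
proof (rule W_maps[OF _ assms])
  fix a x assume a: "a \<in> D" and x: "x \<in> D"
  have "refl_vec a x \<in> R" using a x D_R cr_closed[OF cr] by blast
  moreover have "\<forall>b\<in>Psi. refl_vec a x \<bullet> b = 0"
    using a x by (auto simp: D_def refl_vec_def inner_diff_left)
  ultimately show "refl_vec a x \<in> D" unfolding D_def by blast
qed

lemma Psi'_D: "Psi' \<subseteq> D"
proof
  fix x assume x: "x \<in> Psi'"
  have "x \<in> R" using x sub2 Pv by auto
  moreover have "\<forall>b\<in>Psi. x \<bullet> b = 0" using orth x by (metis inner_commute)
  ultimately show "x \<in> D" unfolding D_def by blast
qed

lemma X_char: assumes "w \<in> W" "x \<in> R" shows "X_rv P x w = (if v \<bullet> w x < 0 then 1 else 0)"
proof -
  have wx: "w x \<in> R" using W_root[OF cr assms] .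
  have "w x \<in> uminus ` P \<longleftrightarrow> - w x \<in> P" by force
  also have "... \<longleftrightarrow> v \<bullet> w x < 0" using neg_root[OF cr wx] wx unfolding Pv by auto
  finally show ?thesis unfolding X_rv_def by simp
qed

lemma key:
  assumes w1: "w1 \<in> W" and w2: "w2 \<in> W"
  shows "\<exists>u0\<in>U. \<forall>d\<in>D. (v \<bullet> w2 d < 0 \<longleftrightarrow> v \<bullet> w1 (u0 d) < 0)"
proof -
  define y1 where "y1 = adjoint w1 v"
  define y2 where "y2 = adjoint w2 v"
  have y1: "\<And>x. v \<bullet> w1 x = x \<bullet> y1" unfolding y1_def using adjoint_works[OF W_linear[OF w1]] by (simp add: inner_commute)
  have y2: "\<And>x. v \<bullet> w2 x = x \<bullet> y2" unfolding y2_def using adjoint_works[OF W_linear[OF w2]] by (simp add: inner_commute)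
  define G where "G u = u y2 \<bullet> y1" for u :: "'a \<Rightarrow> 'a"
  have ne: "G ` U \<noteq> {}" using weyl_group.weyl_id by blast
  have fin: "finite (G ` U)" using finU by simp
  obtain u0 where u0: "u0 \<in> U" "G u0 = Max (G ` U)" using Max_in[OF fin ne] by auto
  have umax: "\<And>u. u \<in> U \<Longrightarrow> G u \<le> G u0" using Max_ge[OF fin] u0 by auto
  show ?thesis
  proof (intro bexI[OF _ u0(1)] ballI)
    fix d assume dD: "d \<in> D"
    show "v \<bullet> w2 d < 0 \<longleftrightarrow> v \<bullet> w1 (u0 d) < 0"
    proof (rule ccontr)
      assume mis: "\<not> ?thesis"
      define e where "e = u0 d"
      have eD: "e \<in> D" unfolding e_def using U_D[OF u0(1) dD] .
      have eR: "e \<in> R" and dR: "d \<in> R" using eD dD D_R by auto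
      have e0: "e \<noteq> 0" using cr_nz[OF cr eR] .
      have p: "u0 y2 \<bullet> e = d \<bullet> y2" unfolding e_def using W_inner[OF u0(1)] by (simp add: inner_commute)
      define pp where "pp = d \<bullet> y2"
      define q where "q = e \<bullet> y1"
      have pp0: "pp \<noteq> 0" using vR[OF W_root[OF cr w2 dR]] y2 pp_def by simp
      have q0: "q \<noteq> 0" using vR[OF W_root[OF cr w1 eR]] y1 q_def by simp
      have "\<not> (pp < 0 \<longleftrightarrow> q < 0)" using mis y1 y2 unfolding pp_def q_def e_def by simp
      then have pq: "pp * q < 0" using pp0 q0 by (auto simp: mult_less_0_iff)
      have ee: "e \<bullet> e > 0" using e0 by simp
      have "refl_vec e \<circ> u0 \<in> U" using u0(1) eD by (rule weyl_group.weyl_step)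
      then have le: "G (refl_vec e \<circ> u0) \<le> G u0" by (rule umax)
      have "G (refl_vec e \<circ> u0) = G u0 - (2 / (e \<bullet> e)) * (pp * q)"
        unfolding G_def using p by (simp add: refl_vec_def inner_diff_left pp_def q_def)
      moreover have "(2 / (e \<bullet> e)) * (pp * q) < 0" using pq ee by (rule_tac mult_pos_neg) auto
      ultimately show False using le by simp
    qed
  qed
qed

definition "fF w = (\<lambda>b\<in>Psi. X_rv P b w)"
definition "gF w = (\<lambda>g\<in>Psi'. X_rv P g w)"

lemma comp_WU: "w \<in> W \<Longrightarrow> u \<in> U \<Longrightarrow> w \<circ> u \<in> W"
  using W_comp U_W by blast

lemma f_inv: assumes "w \<in> W" "u \<in> U" shows "fF (w \<circ> u) = fF w"
  unfolding fF_def by (rule restrict_ext) (use U_fix[OF assms(2)] in \<open>simp add: X_rv_def\<close>)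

lemma inj_compL: assumes "bij u0" shows "inj_on (\<lambda>u. u0 \<circ> u) A"
proof (rule inj_onI)
  fix a b assume "u0 \<circ> a = u0 \<circ> b"
  then show "a = b" using bij_is_inj[OF assms] by (auto simp: fun_eq_iff dest: injD)
qed

lemma inj_compR: assumes "bij u" shows "inj_on (\<lambda>w. w \<circ> u) A"
proof (rule inj_onI)
  fix a b assume eq: "a \<circ> u = b \<circ> u"
  show "a = b"
  proof
    fix x obtain y where "x = u y" using bij_is_surj[OF assms] by (metis surjD)
    then show "a x = b x" using fun_cong[OF eq, of y] by simp
  qed
qed

lemma cW: assumes w1: "w1 \<in> W" and w2: "w2 \<in> W"
  shows "card {u\<in>U. gF (w2 \<circ> u) \<in> SB} = card {u\<in>U. gF (w1 \<circ> u) \<in> SB}"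
proof -
  obtain u0 where u0: "u0 \<in> U" and eq: "\<And>d. d \<in> D \<Longrightarrow> (v \<bullet> w2 d < 0 \<longleftrightarrow> v \<bullet> w1 (u0 d) < 0)"
    using key[OF w1 w2] by blast
  have geq: "\<And>u. u \<in> U \<Longrightarrow> gF (w2 \<circ> u) = gF (w1 \<circ> (u0 \<circ> u))"
  proof -
    fix u assume u: "u \<in> U"
    have a: "w2 \<circ> u \<in> W" using comp_WU[OF w2 u] .
    have b: "w1 \<circ> (u0 \<circ> u) \<in> W" using comp_WU[OF w1 W_comp[OF u0 u]] .
    show "gF (w2 \<circ> u) = gF (w1 \<circ> (u0 \<circ> u))"
      unfolding gF_def
    proof (rule restrict_ext)
      fix g assume g: "g \<in> Psi'"
      then have gR: "g \<in> R" and gD: "g \<in> D" using Psi'_D D_R by auto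
      have "u g \<in> D" using U_D[OF u gD] .
      then show "X_rv P g (w2 \<circ> u) = X_rv P g (w1 \<circ> (u0 \<circ> u))"
        using X_char[OF a gR] X_char[OF b gR] eq by simp
    qed
  qed
  have "{u\<in>U. gF (w2 \<circ> u) \<in> SB} = {u\<in>U. gF (w1 \<circ> (u0 \<circ> u)) \<in> SB}"
  proof (rule Collect_cong)
    fix u show "(u \<in> U \<and> gF (w2 \<circ> u) \<in> SB) = (u \<in> U \<and> gF (w1 \<circ> (u0 \<circ> u)) \<in> SB)"
    proof (cases "u \<in> U")
      case True then show ?thesis using geq[OF True] by simp
    next
      case False then show ?thesis by simp
    qed
  qed
  then have "card {u\<in>U. gF (w2 \<circ> u) \<in> SB} = card {u\<in>U. gF (w1 \<circ> (u0 \<circ> u)) \<in> SB}"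
    by (rule arg_cong)
  also have "... = card {u\<in>U. gF (w1 \<circ> u) \<in> SB}"
    using card_endo[of U "\<lambda>u. u0 \<circ> u" "\<lambda>u. gF (w1 \<circ> u) \<in> SB"] finU W_comp[OF u0] inj_compL[OF W_bij[OF u0]]
    by blast
  finally show ?thesis .
qed

lemma count:
  "card U * card {w\<in>W. fF w \<in> SA \<and> gF w \<in> SB} = card {w\<in>W. fF w \<in> SA} * card {u\<in>U. gF (id \<circ> u) \<in> SB}"
proof -
  let ?c = "card {u\<in>U. gF (id \<circ> u) \<in> SB}"
  have "card U * card {w\<in>W. fF w \<in> SA \<and> gF w \<in> SB} = (\<Sum>u\<in>U. card {w\<in>W. fF w \<in> SA \<and> gF w \<in> SB})"
    by simp
  also have "... = (\<Sum>u\<in>U. card {w\<in>W. fF (w \<circ> u) \<in> SA \<and> gF (w \<circ> u) \<in> SB})"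
  proof (rule sum.cong[OF refl])
    fix u assume u: "u \<in> U"
    show "card {w\<in>W. fF w \<in> SA \<and> gF w \<in> SB} = card {w\<in>W. fF (w \<circ> u) \<in> SA \<and> gF (w \<circ> u) \<in> SB}"
    proof -
      have "(\<lambda>w. w \<circ> u) ` W \<subseteq> W" using comp_WU[OF _ u] by blast
      from card_endo[OF finW this inj_compR[OF W_bij[OF U_W[OF u]]], of "\<lambda>w. fF w \<in> SA \<and> gF w \<in> SB"]
      show ?thesis by (rule sym)
    qed
  qed
  also have "... = (\<Sum>u\<in>U. card {w\<in>W. fF w \<in> SA \<and> gF (w \<circ> u) \<in> SB})"
  proof (rule sum.cong[OF refl])
    fix u assume u: "u \<in> U"
    have "{w\<in>W. fF (w \<circ> u) \<in> SA \<and> gF (w \<circ> u) \<in> SB} = {w\<in>W. fF w \<in> SA \<and> gF (w \<circ> u) \<in> SB}"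
      using f_inv[OF _ u] by auto
    then show "card {w\<in>W. fF (w \<circ> u) \<in> SA \<and> gF (w \<circ> u) \<in> SB} = card {w\<in>W. fF w \<in> SA \<and> gF (w \<circ> u) \<in> SB}"
      by simp
  qed
  also have "... = (\<Sum>u\<in>U. \<Sum>w\<in>W. if fF w \<in> SA \<and> gF (w \<circ> u) \<in> SB then 1 else 0)"
    using finW by (simp add: card_ind)
  also have "... = (\<Sum>w\<in>W. \<Sum>u\<in>U. if fF w \<in> SA \<and> gF (w \<circ> u) \<in> SB then 1 else 0)"
    by (rule sum.swap)
  also have "... = (\<Sum>w\<in>W. if fF w \<in> SA then card {u\<in>U. gF (w \<circ> u) \<in> SB} else 0)"
  proof (rule sum.cong[OF refl])
    fix w
    show "(\<Sum>u\<in>U. if fF w \<in> SA \<and> gF (w \<circ> u) \<in> SB then 1 else 0) = (if fF w \<in> SA then card {u\<in>U. gF (w \<circ> u) \<in> SB} else 0)"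
    proof (cases "fF w \<in> SA")
      case True then show ?thesis by (simp add: card_ind[OF finU])
    next
      case False then show ?thesis by simp
    qed
  qed
  also have "... = (\<Sum>w\<in>W. if fF w \<in> SA then ?c else 0)"
    using cW[OF weyl_group.weyl_id] by (intro sum.cong refl) auto
  also have "... = card {w\<in>W. fF w \<in> SA} * ?c"
    using finW by (simp add: sum.If_cases Int_def)
  finally show ?thesis .
qed

lemma indep_count:
  "card {w\<in>W. fF w \<in> SA \<and> gF w \<in> SB} * card W = card {w\<in>W. fF w \<in> SA} * card {w\<in>W. gF w \<in> SB}"
proof -
  let ?c = "card {u\<in>U. gF (id \<circ> u) \<in> SB}"
  have 1: "card U * card {w\<in>W. fF w \<in> SA \<and> gF w \<in> SB} = card {w\<in>W. fF w \<in> SA} * ?c" by (rule count)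
  have 2: "card U * card {w\<in>W. gF w \<in> SB} = card W * ?c" using count[of UNIV SB] by simp
  have pos: "card U > 0" using finU weyl_group.weyl_id card_gt_0_iff by blast
  have "card U * (card {w\<in>W. fF w \<in> SA \<and> gF w \<in> SB} * card W) = (card U * card {w\<in>W. fF w \<in> SA \<and> gF w \<in> SB}) * card W"
    by (rule mult.assoc[symmetric])
  also have "... = (card {w\<in>W. fF w \<in> SA} * ?c) * card W" by (simp only: 1)
  also have "... = card {w\<in>W. fF w \<in> SA} * (card W * ?c)" by (simp add: ac_simps)
  also have "... = card {w\<in>W. fF w \<in> SA} * (card U * card {w\<in>W. gF w \<in> SB})" by (simp only: 2)
  also have "... = card U * (card {w\<in>W. fF w \<in> SA} * card {w\<in>W. gF w \<in> SB})" by (simp add: ac_simps)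
  finally have "card U * (card {w\<in>W. fF w \<in> SA \<and> gF w \<in> SB} * card W) = card U * (card {w\<in>W. fF w \<in> SA} * card {w\<in>W. gF w \<in> SB})" .
  then show ?thesis using pos by simp
qed

end


lemma div_aux:
  fixes x y z c :: real
  assumes "x * c = y * z" "c > 0"
  shows "x / c = y / c * (z / c)"
proof -
  have "y / c * (z / c) = (y * z) / (c * c)" by simp
  also have "... = (x * c) / (c * c)" using assms(1) by simp
  also have "... = x / c" using assms(2) by simp
  finally show ?thesis by simp
qed

theorem theorem3p4:
  fixes R P \<Psi> \<Psi>' :: "'a::euclidean_space set"
  assumes "crystallographic_root_system R"
    and "positive_system R P"
    and "\<Psi> \<subseteq> P" and "\<Psi>' \<subseteq> P"
    and "\<And>b g. b \<in> \<Psi> \<Longrightarrow> g \<in> \<Psi>' \<Longrightarrow> ord_refl b g = 2"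
  shows "prob_space.indep_var (weyl_uniform R)
           (Pi\<^sub>M \<Psi> (\<lambda>_. borel)) (\<lambda>w. \<lambda>b\<in>\<Psi>. X_rv P b w)
           (Pi\<^sub>M \<Psi>' (\<lambda>_. borel)) (\<lambda>w. \<lambda>g\<in>\<Psi>'. X_rv P g w)"
proof -
  obtain v where vR: "\<And>a. a \<in> R \<Longrightarrow> v \<bullet> a \<noteq> 0" and Pv: "P = {a\<in>R. v \<bullet> a > 0}"
    using assms(2) unfolding positive_system_def by blast
  have orth: "\<And>b g. b \<in> \<Psi> \<Longrightarrow> g \<in> \<Psi>' \<Longrightarrow> b \<bullet> g = 0"
    using ord_orth[OF assms(1,2)] assms(3,4,5) by blast
  interpret S: setting R P \<Psi> \<Psi>' v
    by (rule setting.intro[OF assms(1) vR Pv assms(3) assms(4) orth])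
  define W where "W = weyl_group R"
  have finW: "finite W" and neW: "W \<noteq> {}" unfolding W_def using S.finW weyl_group.weyl_id by auto
  define F where "F = (\<lambda>w. \<lambda>b\<in>\<Psi>. X_rv P b w)"
  define G where "G = (\<lambda>w. \<lambda>g\<in>\<Psi>'. X_rv P g w)"
  have FF: "F = S.fF" unfolding F_def S.fF_def by (rule ext) simp
  have GG: "G = S.gF" unfolding G_def S.gF_def by (rule ext) simp
  let ?M = "measure_pmf (pmf_of_set W)"
  have PS: "prob_space ?M" by (rule prob_space_measure_pmf)
  have prob: "measure ?M X = card (W \<inter> X) / card W" for X
    using measure_pmf_of_set[OF neW finW] .
  have rvF: "F \<in> measurable ?M (Pi\<^sub>M \<Psi> (\<lambda>_. borel))"
    by (simp add: F_def space_PiM)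
  have rvG: "G \<in> measurable ?M (Pi\<^sub>M \<Psi>' (\<lambda>_. borel))"
    by (simp add: G_def space_PiM)
  have sets_eq: "(\<lambda>i. {case_bool F G i -` A \<inter> space ?M |A. A \<in> sets (case_bool (Pi\<^sub>M \<Psi> (\<lambda>_. borel)) (Pi\<^sub>M \<Psi>' (\<lambda>_. borel)) i)})
     = case_bool {F -` A \<inter> space ?M |A. A \<in> sets (Pi\<^sub>M \<Psi> (\<lambda>_. borel))} {G -` A \<inter> space ?M |A. A \<in> sets (Pi\<^sub>M \<Psi>' (\<lambda>_. borel))}"
    by (rule ext) (simp split: bool.split)
  have ind: "prob_space.indep_set ?M {F -` A \<inter> space ?M |A. A \<in> sets (Pi\<^sub>M \<Psi> (\<lambda>_. borel))} {G -` A \<inter> space ?M |A. A \<in> sets (Pi\<^sub>M \<Psi>' (\<lambda>_. borel))}"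
    unfolding prob_space.indep_sets2_eq[OF PS]
  proof (intro conjI ballI)
    fix a b
    assume a: "a \<in> {F -` A \<inter> space ?M |A. A \<in> sets (Pi\<^sub>M \<Psi> (\<lambda>_. borel))}"
      and b: "b \<in> {G -` A \<inter> space ?M |A. A \<in> sets (Pi\<^sub>M \<Psi>' (\<lambda>_. borel))}"
    obtain SA where a0: "a = F -` SA \<inter> space ?M" using a by blast
    then have a': "a = F -` SA" by simp
    obtain SB where b0: "b = G -` SB \<inter> space ?M" using b by blast
    then have b': "b = G -` SB" by simp
    have c1: "W \<inter> (a \<inter> b) = {w\<in>W. S.fF w \<in> SA \<and> S.gF w \<in> SB}" unfolding a' b' FF GG by blast
    have c2: "W \<inter> a = {w\<in>W. S.fF w \<in> SA}" unfolding a' FF by blast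
    have c3: "W \<inter> b = {w\<in>W. S.gF w \<in> SB}" unfolding b' GG by blast
    have i: "card {w\<in>W. S.fF w \<in> SA \<and> S.gF w \<in> SB} * card W
        = card {w\<in>W. S.fF w \<in> SA} * card {w\<in>W. S.gF w \<in> SB}"
      using S.indep_count[of SA SB] unfolding W_def .
    have cnt: "real (card {w\<in>W. S.fF w \<in> SA \<and> S.gF w \<in> SB}) * real (card W)
        = real (card {w\<in>W. S.fF w \<in> SA}) * real (card {w\<in>W. S.gF w \<in> SB})"
      by (simp only: of_nat_mult[symmetric] i)
    have cW0: "real (card W) > 0" using finW neW by (simp add: card_gt_0_iff)
    show "measure ?M (a \<inter> b) = measure ?M a * measure ?M b"
      unfolding prob c1 c2 c3 by (rule div_aux[OF cnt cW0])
  qed simp_all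
  show ?thesis
    unfolding weyl_uniform_def W_def[symmetric] F_def[symmetric] G_def[symmetric]
      prob_space.indep_var_def[OF PS] prob_space.indep_vars_def2[OF PS]
  proof (intro conjI ballI)
    fix i :: bool
    show "case_bool F G i \<in> measurable ?M (case_bool (Pi\<^sub>M \<Psi> (\<lambda>_. borel)) (Pi\<^sub>M \<Psi>' (\<lambda>_. borel)) i)"
      using rvF rvG by (cases i) simp_all
  next
    show "prob_space.indep_sets ?M (\<lambda>i. {case_bool F G i -` A \<inter> space ?M |A. A \<in> sets (case_bool (Pi\<^sub>M \<Psi> (\<lambda>_. borel)) (Pi\<^sub>M \<Psi>' (\<lambda>_. borel)) i)}) UNIV"
      unfolding sets_eq using ind unfolding prob_space.indep_set_def[OF PS] .
  qed
qed

end
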